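(* The classes $\mathsf{WA}$ and $\mathsf{CT}^{\mathsf{obl}}_{\forall\forall}$ are incomparable with respect to inclusion.
   Context: A tgd is $\alpha(\bar x,\bar y)\rightarrow\exists\bar z\,\beta(\bar x,\bar z)$ with $\bar x$ the variables in both body and head. A position is $(R,i)$ with $1\le i\le\mathrm{arity}(R)$. The dependency graph of a finite tgd set $\Sigma$ has positions as vertices and an edge $(R,i)\to(S,j)$ whenever some tgd of $\Sigma$ has a variable $x\in\bar x$ at $(R,i)$ in its body and either $x$ occurs at $(S,j)$ in its head (universal edge) or an existential variable occurs at $(S,j)$ in its head (existential edge). $\mathsf{WA}$ (weakly acyclic) is the class of $\Sigma$ whose dependency graph has no cycle through an existential edge. Oblivious chase: from an instance (finite set of atoms over constants and nulls), repeatedly fire triggers $(\xi,h)$ with $h(\alpha)\subseteq$ current instance (active or not), each trigger at most once, adding $h'(\beta)$ with fresh nulls for existential variables; infinite sequences are fair. $\mathsf{CT}^{\mathsf{obl}}_{\forall\forall}$ is the class of finite tgd sets for which every oblivious chase sequence from every instance is finite. *)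

theory Defs
  imports Main
begin

type_synonym vatom = "nat \<times> nat list"   (* R(x1,...,xn): relation name, variables *)

datatype tgd = TGD (body: "vatom list") (head: "vatom list")

definition atom_vars :: "vatom list \<Rightarrow> nat set" where
  "atom_vars as = (\<Union>(R, xs) \<in> set as. set xs)"

definition frontier :: "tgd \<Rightarrow> nat set" where
  "frontier \<xi> = atom_vars (body \<xi>) \<inter> atom_vars (head \<xi>)"

definition exvars :: "tgd \<Rightarrow> nat set" where
  "exvars \<xi> = atom_vars (head \<xi>) - atom_vars (body \<xi>)"

definition tgd_set :: "tgd set \<Rightarrow> bool" where
  "tgd_set \<Sigma> \<longleftrightarrow> finite \<Sigma> \<and>
     (\<forall>\<xi>\<in>\<Sigma>. body \<xi> \<noteq> [] \<and> head \<xi> \<noteq> []) \<and>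
     (\<forall>\<xi>\<in>\<Sigma>. \<forall>\<xi>'\<in>\<Sigma>. \<forall>R xs ys.
        (R, xs) \<in> set (body \<xi> @ head \<xi>) \<longrightarrow> (R, ys) \<in> set (body \<xi>' @ head \<xi>') \<longrightarrow>
        length xs = length ys)"

type_synonym position = "nat \<times> nat"   (* (R, i), 1 \<le> i \<le> arity R *)

definition occurs_at :: "nat \<Rightarrow> position \<Rightarrow> vatom list \<Rightarrow> bool" where
  "occurs_at x p as \<longleftrightarrow> (\<exists>xs. (fst p, xs) \<in> set as \<and> 1 \<le> snd p \<and> snd p \<le> length xs
                              \<and> xs ! (snd p - 1) = x)"

definition universal_edges :: "tgd set \<Rightarrow> (position \<times> position) set" where
  "universal_edges \<Sigma> = {(p, q). \<exists>\<xi>\<in>\<Sigma>. \<exists>x\<in>frontier \<xi>.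
       occurs_at x p (body \<xi>) \<and> occurs_at x q (head \<xi>)}"

definition existential_edges :: "tgd set \<Rightarrow> (position \<times> position) set" where
  "existential_edges \<Sigma> = {(p, q). \<exists>\<xi>\<in>\<Sigma>. \<exists>x\<in>frontier \<xi>. \<exists>z\<in>exvars \<xi>.
       occurs_at x p (body \<xi>) \<and> occurs_at z q (head \<xi>)}"

definition dep_graph :: "tgd set \<Rightarrow> (position \<times> position) set" where
  "dep_graph \<Sigma> = universal_edges \<Sigma> \<union> existential_edges \<Sigma>"

definition weakly_acyclic :: "tgd set \<Rightarrow> bool" where
  "weakly_acyclic \<Sigma> \<longleftrightarrow>
     \<not> (\<exists>p q. (p, q) \<in> existential_edges \<Sigma> \<and> (q, p) \<in> (dep_graph \<Sigma>)\<^sup>*)"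

definition WA :: "tgd set set" where
  "WA = {\<Sigma>. tgd_set \<Sigma> \<and> weakly_acyclic \<Sigma>}"

datatype trm = Cst nat | Nul nat

type_synonym atom = "nat \<times> trm list"
type_synonym inst = "atom set"

definition terms_of :: "inst \<Rightarrow> trm set" where
  "terms_of I = (\<Union>(R, ts) \<in> I. set ts)"

text \<open>A trigger is a tgd together with a homomorphism on its body variables
  (a partial map whose domain is exactly the set of body variables).\<close>
type_synonym trigger = "tgd \<times> (nat \<rightharpoonup> trm)"

definition is_trigger :: "tgd set \<Rightarrow> inst \<Rightarrow> trigger \<Rightarrow> bool" where
  "is_trigger \<Sigma> I \<tau> \<longleftrightarrow> (case \<tau> of (\<xi>, h) \<Rightarrow>
     \<xi> \<in> \<Sigma> \<and> dom h = atom_vars (body \<xi>) \<and>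
     (\<forall>(R, xs) \<in> set (body \<xi>). (R, map (\<lambda>x. the (h x)) xs) \<in> I))"

definition fires :: "inst \<Rightarrow> trigger \<Rightarrow> inst \<Rightarrow> bool" where
  "fires I \<tau> J \<longleftrightarrow> (case \<tau> of (\<xi>, h) \<Rightarrow>
     (\<exists>g :: nat \<Rightarrow> trm.
        (\<forall>x \<in> atom_vars (body \<xi>). h x = Some (g x)) \<and>
        inj_on g (exvars \<xi>) \<and>
        (\<forall>z \<in> exvars \<xi>. (\<exists>n. g z = Nul n) \<and> g z \<notin> terms_of I) \<and>
        J = I \<union> (\<lambda>(R, xs). (R, map g xs)) ` set (head \<xi>)))"

definition infinite_obl_chase :: "tgd set \<Rightarrow> inst \<Rightarrow> (nat \<Rightarrow> inst) \<Rightarrow> (nat \<Rightarrow> trigger) \<Rightarrow> bool" where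
  "infinite_obl_chase \<Sigma> I0 I t \<longleftrightarrow>
     I 0 = I0 \<and>
     (\<forall>i. is_trigger \<Sigma> (I i) (t i) \<and> (\<forall>j<i. t j \<noteq> t i) \<and> fires (I i) (t i) (I (Suc i))) \<and>
     (\<forall>i \<tau>. is_trigger \<Sigma> (I i) \<tau> \<longrightarrow> (\<exists>j. t j = \<tau>))"

definition is_instance :: "inst \<Rightarrow> bool" where
  "is_instance I \<longleftrightarrow> finite I"

definition CT_obl_AA :: "tgd set set" where
  "CT_obl_AA = {\<Sigma>. tgd_set \<Sigma> \<and>
     (\<forall>I0. is_instance I0 \<longrightarrow> \<not> (\<exists>I t. infinite_obl_chase \<Sigma> I0 I t))}"

end

theory Submission
  imports Defs
begin

definition xi1 :: tgd where "xi1 = TGD [(0,[0,1])] [(0,[0,2])]"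

fun yy :: "nat \<Rightarrow> trm" where
  "yy 0 = Cst 1" | "yy (Suc i) = Nul i"

lemma yy_inj: "yy i = yy j \<Longrightarrow> i = j"
  by (cases i; cases j) auto

definition II :: "nat \<Rightarrow> inst" where
  "II i = (\<lambda>j. (0::nat, [Cst 0, yy j])) ` {..i}"

definition hh :: "nat \<Rightarrow> nat \<rightharpoonup> trm" where
  "hh i = (\<lambda>v. if v = 0 then Some (Cst 0) else if v = 1 then Some (yy i) else None)"

definition tt :: "nat \<Rightarrow> trigger" where "tt i = (xi1, hh i)"

lemma av1: "atom_vars (body xi1) = {0,1}" "atom_vars (head xi1) = {0,2}"
  by (auto simp: atom_vars_def xi1_def)

lemma ex1: "exvars xi1 = {2}" "frontier xi1 = {0}"
  by (auto simp: exvars_def frontier_def av1)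

lemma occ_body1: "occurs_at x p (body xi1) \<longleftrightarrow> (p = (0,1) \<and> x = 0) \<or> (p = (0,2) \<and> x = 1)"
  apply (cases p)
  apply (auto simp: occurs_at_def xi1_def)
  apply (case_tac b; auto simp: nth_Cons split: nat.splits)+
  done

lemma occ_head1: "occurs_at x p (head xi1) \<longleftrightarrow> (p = (0,1) \<and> x = 0) \<or> (p = (0,2) \<and> x = 2)"
  apply (cases p)
  apply (auto simp: occurs_at_def xi1_def)
  apply (case_tac b; auto simp: nth_Cons split: nat.splits)+
  done

lemma dep1: "dep_graph {xi1} = {((0,1),(0,1)), ((0,1),(0,2))}"
  by (auto simp: dep_graph_def universal_edges_def existential_edges_def ex1 occ_body1 occ_head1)

lemma exe1: "existential_edges {xi1} = {((0,1),(0,2))}"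
  by (auto simp: existential_edges_def ex1 occ_body1 occ_head1)

lemma wa1: "{xi1} \<in> WA"
proof -
  have ts: "tgd_set {xi1}" by (auto simp: tgd_set_def xi1_def)
  have "\<not> ((q, p) \<in> (dep_graph {xi1})\<^sup>* \<and> q = (0,2) \<and> p = (0,1))" for p q :: position
  proof
    assume a: "(q, p) \<in> (dep_graph {xi1})\<^sup>* \<and> q = (0,2) \<and> p = (0,1)"
    hence "(q,p) \<in> (dep_graph {xi1})\<^sup>*" by blast
    then show False using a
      by (cases rule: converse_rtranclE) (auto simp: dep1)
  qed
  hence "weakly_acyclic {xi1}" unfolding weakly_acyclic_def exe1 by blast
  with ts show ?thesis by (simp add: WA_def)
qed

lemma terms_II: "terms_of (II i) = insert (Cst 0) (yy ` {..i})"
  by (auto simp: terms_of_def II_def)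

lemma yy_Nul: "yy j = Nul i \<Longrightarrow> j = Suc i"
  by (cases j) auto

lemma chase1: "infinite_obl_chase {xi1} (II 0) II tt"
proof -
  have trig: "is_trigger {xi1} (II i) (tt i)" for i
  proof -
    have "dom (hh i) = {0,1}" by (auto simp: hh_def split: if_splits)
    moreover have "(0, [Cst 0, yy i]) \<in> II i" by (auto simp: II_def)
    moreover have "set (body xi1) = {(0,[0,1])}" by (simp add: xi1_def)
    ultimately show ?thesis by (simp add: is_trigger_def tt_def av1 hh_def)
  qed
  have dist: "\<forall>j<i. tt j \<noteq> tt i" for i
  proof (intro allI impI)
    fix j assume "j < i"
    show "tt j \<noteq> tt i"
    proof
      assume "tt j = tt i"
      hence "hh j 1 = hh i 1" by (simp add: tt_def)
      hence "yy j = yy i" by (simp add: hh_def)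
      with yy_inj \<open>j<i\<close> show False by blast
    qed
  qed
  have fire: "fires (II i) (tt i) (II (Suc i))" for i
  proof -
    define g where "g = (\<lambda>v::nat. if v = 0 then Cst 0 else if v = 1 then yy i else Nul i)"
    have n: "Nul i \<notin> terms_of (II i)"
    proof
      assume "Nul i \<in> terms_of (II i)"
      then obtain j where "j \<le> i" "yy j = Nul i" by (auto simp: terms_II)
      then show False using yy_Nul by fastforce
    qed
    have e: "II (Suc i) = II i \<union> (\<lambda>(R, xs). (R, map g xs)) ` set (head xi1)"
      unfolding g_def by (auto simp: II_def xi1_def atMost_Suc)
    have a: "\<forall>x \<in> atom_vars (body xi1). hh i x = Some (g x)"
      by (simp add: av1 hh_def g_def)
    have b: "inj_on g (exvars xi1)" by (simp add: ex1)
    have c: "\<forall>z \<in> exvars xi1. (\<exists>n. g z = Nul n) \<and> g z \<notin> terms_of (II i)"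
      using n by (simp add: ex1 g_def)
    show ?thesis unfolding fires_def tt_def prod.case
      using a b c e by blast
  qed
  have fair: "\<exists>j. tt j = \<tau>" if "is_trigger {xi1} (II i) \<tau>" for i \<tau>
  proof -
    obtain \<xi> h where tau: "\<tau> = (\<xi>, h)" by fastforce
    have x: "\<xi> = xi1" using that by (simp add: tau is_trigger_def)
    have bs: "set (body xi1) = {(0,[0,1])}" by (simp add: xi1_def)
    have d: "dom h = {0,1}"
      and m: "(0, [the (h 0), the (h 1)]) \<in> II i"
      using that by (simp_all add: tau x is_trigger_def av1 bs)
    from m obtain j where j: "j \<le> i" "(0::nat, [the (h 0), the (h 1)]) = (0, [Cst 0, yy j])"
      unfolding II_def by blast
    have h0: "the (h 0) = Cst 0" and h1: "the (h 1) = yy j" using j(2) by simp_all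
    have "h = hh j"
    proof
      fix v show "h v = hh j v"
      proof (cases "v = 0 \<or> v = 1")
        case True
        then have "v \<in> dom h" using d by blast
        then have "h v = Some (the (h v))" by auto
        then show ?thesis using True h0 h1 by (auto simp: hh_def)
      next
        case False
        then have "v \<notin> dom h" using d by blast
        then show ?thesis using False by (simp add: domIff hh_def)
      qed
    qed
    thus ?thesis by (auto simp: tau x tt_def)
  qed
  show ?thesis unfolding infinite_obl_chase_def using trig dist fire fair by blast
qed

lemma not_ct1: "{xi1} \<notin> CT_obl_AA"
proof -
  have "is_instance (II 0)" by (simp add: is_instance_def II_def)
  thus ?thesis using chase1 by (auto simp: CT_obl_AA_def)
qed

definition xi2 :: tgd where "xi2 = TGD [(0,[0]),(1,[0])] [(0,[1]),(2,[0])]"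

lemma av2: "atom_vars (body xi2) = {0}" "atom_vars (head xi2) = {0,1}"
  by (auto simp: atom_vars_def xi2_def)

lemma notwa2: "{xi2} \<notin> WA"
proof -
  have "((0,1),(0,1)) \<in> existential_edges {xi2}"
  proof -
    have f: "0 \<in> frontier xi2" "1 \<in> exvars xi2"
      by (auto simp: frontier_def exvars_def av2)
    have o: "occurs_at 0 (0,1) (body xi2)" "occurs_at 1 (0,1) (head xi2)"
      by (auto simp: occurs_at_def xi2_def)
    show ?thesis unfolding existential_edges_def using f o by blast
  qed
  thus ?thesis by (auto simp: WA_def weakly_acyclic_def)
qed

lemma ct2: "{xi2} \<in> CT_obl_AA"
proof -
  have ts: "tgd_set {xi2}" by (auto simp: tgd_set_def xi2_def)
  have "\<not> infinite_obl_chase {xi2} I0 I t" if fin: "finite I0" for I0 I t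
  proof
    assume c: "infinite_obl_chase {xi2} I0 I t"
    have S: "(1, ts) \<in> I i \<Longrightarrow> (1, ts) \<in> I0" for i ts
    proof (induction i)
      case 0 then show ?case using c by (simp add: infinite_obl_chase_def)
    next
      case (Suc i)
      from c have "fires (I i) (t i) (I (Suc i))" by (simp add: infinite_obl_chase_def)
      moreover from c have "is_trigger {xi2} (I i) (t i)" by (simp add: infinite_obl_chase_def)
      ultimately have "I (Suc i) \<subseteq> I i \<union> {a. fst a \<noteq> 1}"
        by (cases "t i") (auto simp: fires_def is_trigger_def xi2_def)
      with Suc show ?case by auto
    qed
    define C where "C = {c. (1::nat, [c]) \<in> I0}"
    have fC: "finite C" unfolding C_def
      using finite_vimageI[OF fin, of "\<lambda>c. (1::nat, [c])"] by (simp add: inj_def vimage_def)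
    have "t i \<in> (\<lambda>c. (xi2, [0 \<mapsto> c])) ` C" for i
    proof -
      obtain \<xi> h where tau: "t i = (\<xi>, h)" by fastforce
      from c have "is_trigger {xi2} (I i) (t i)" by (simp add: infinite_obl_chase_def)
      hence x: "\<xi> = xi2" and d: "dom h = {0}" and m: "(1, [the (h 0)]) \<in> I i"
        by (auto simp: tau is_trigger_def atom_vars_def xi2_def)
      have "h = [0 \<mapsto> the (h 0)]"
      proof
        fix v show "h v = [0 \<mapsto> the (h 0)] v"
        proof (cases "v = 0")
          case True
          then have "v \<in> dom h" using d by simp
          then show ?thesis using True by auto
        next
          case False
          then have "v \<notin> dom h" using d by simp
          then show ?thesis using False by (simp add: domIff)
        qed
      qed
      moreover have "the (h 0) \<in> C" using S[OF m] by (simp add: C_def)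
      ultimately show ?thesis by (auto simp: tau x)
    qed
    hence sub: "range t \<subseteq> (\<lambda>c. (xi2, [0 \<mapsto> c])) ` C" by blast
    have "inj t"
    proof (rule injI)
      fix a b assume "t a = t b"
      with c show "a = b" unfolding infinite_obl_chase_def
        by (metis linorder_neqE_nat)
    qed
    hence "infinite (range t)" using finite_imageD infinite_UNIV_nat by blast
    with sub fC show False using finite_subset by blast
  qed
  with ts show ?thesis by (auto simp: CT_obl_AA_def is_instance_def)
qed

theorem proposition6:
  shows "\<not> (WA \<subseteq> CT_obl_AA) \<and> \<not> (CT_obl_AA \<subseteq> WA)"
proof
  show "\<not> (WA \<subseteq> CT_obl_AA)"
  proof
    assume "WA \<subseteq> CT_obl_AA"
    with wa1 have "{xi1} \<in> CT_obl_AA" by (rule subsetD[rotated])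
    with not_ct1 show False by contradiction
  qed
  show "\<not> (CT_obl_AA \<subseteq> WA)"
  proof
    assume "CT_obl_AA \<subseteq> WA"
    with ct2 have "{xi2} \<in> WA" by (rule subsetD[rotated])
    with notwa2 show False by contradiction
  qed
qed

end
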